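(* Let $\ell\in\mathbb{N}$, $s=2\ell-1$, and let $n_1,n_2,N_1,N_2\in\mathbb{N}$ satisfy $$\frac{n_1}{N_1}=\frac{n_2}{N_2}=s .$$ Let $m_1,m_2\in\mathbb{N}$ be arbitrary integers with $m_1<n_1$ and $m_2<n_2$, and put $\mathbf n=(n_1,n_2)$, $\mathbf m=(m_1,m_2)$. Let $\mathbf f=(f_1,f_2,f_3)$ and $\tilde{\mathbf f}=(\tilde f_1,\tilde f_2,\tilde f_3)$ be functions from $[-1,1]^2$ to $\mathbb{R}^3$. Define the color images (triples of matrices) $$I(i,j)=\mathbf f(x_i^{n_1},y_j^{n_2}),\quad \tilde I(i,j)=\tilde{\mathbf f}(x_i^{n_1},y_j^{n_2}),\qquad i=1,\dots,n_1,\ j=1,\dots,n_2,$$ $$R(i,j)=\mathbf f(x_i^{N_1},y_j^{N_2}),\qquad i=1,\dots,N_1,\ j=1,\dots,N_2,$$ and the output image $\tilde R=[\tilde R_1,\tilde R_2,\tilde R_3]$ by $$\tilde R_\lambda(i,j)=V_{\mathbf n}^{\mathbf m}\tilde f_\lambda(x_i^{N_1},y_j^{N_2}),\qquad i=1,\dots,N_1,\ j=1,\dots,N_2,\ \lambda=1,2,3 .$$ Then $$\mathrm{MSE}(R,\tilde R)\le s^2\,\mathrm{MSE}(I,\tilde I),$$ and the same estimate holds for the luma channels: $\mathrm{MSE}(R_Y,\tilde R_Y)\le s^2\,\mathrm{MSE}(I_Y,\tilde I_Y)$. If moreover $I=\tilde I$, then $\mathrm{PSNR}(R,\tilde R)=\infty$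 and $\mathrm{SSIM}(R,\tilde R)=1$.
   Context: Chebyshev nodes: for $n\in\mathbb N$ and $k=1,\dots,n$, $t_k^n=\frac{(2k-1)\pi}{2n}$, and $x_k^n=y_k^n=\cos(t_k^n)$ (zeros of the first-kind Chebyshev polynomial of degree $n$). Throughout, $\xi\in[-1,1]$ and $t\in[0,\pi]$ are related by $\xi=\cos t$. Orthogonal VP polynomials: for $n,m\in\mathbb N$ with $m\le n$ and $r=0,\dots,n-1$, $q^n_{m,r}(\xi)=\cos(rt)$ if $0\le r\le n-m$, and $q^n_{m,r}(\xi)=\frac{n+m-r}{2m}\cos(rt)+\frac{n-m-r}{2m}\cos((2n-r)t)$ if $n-m<r<n$. Fundamental VP polynomials: $\Phi^{n}_{m,k}(\xi)=\frac2n\Big[\frac12+\sum_{r=1}^{n-1}\cos(r t_k^n)\,q^n_{m,r}(\xi)\Big]$, $k=1,\dots,n$. VP polynomial of $g:[-1,1]^2\to\mathbb R$: $V_{\mathbf n}^{\mathbf m}g(x,y)=\sum_{i=1}^{n_1}\sum_{j=1}^{n_2}g(x_i^{n_1},y_j^{n_2})\,\Phi^{n_1}_{m_1,i}(x)\,\Phi^{n_2}_{m_2,j}(y)$. Metrics: for real $\nu\times\mu$ matrices, $\mathrm{MSE}(A,B)=\frac1{\nu\mu}\|A-B\|_F^2$ (Frobenius norm). For color images $A=[A_1,A_2,A_3]$, $B=[B_1,B_2,B_3]$, $\mathrm{MSE}(A,B)=\frac13\sum_{\lambda=1}^3\mathrm{MSE}(A_\lambda,B_\lambda)$. The luma channel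 is $A_Y=\sum_{\lambda=1}^3\alpha_\lambda A_\lambda+\alpha_4$ (entrywise, with fixed real coefficients $\alpha_1,\dots,\alpha_4$, those of the ITU-R BT.601 standard). $\mathrm{PSNR}(A,B)=20\log_{10}\big(\max_f/\sqrt{\mathrm{MSE}(A_Y,B_Y)}\big)$, where $\max_f>0$ is the maximal pixel value, with the convention that it equals $\infty$ when $\mathrm{MSE}(A_Y,B_Y)=0$. $\mathrm{SSIM}(A,B)=\frac{(2\mu_A\mu_B+c_1)(2\,\mathrm{cov}+c_2)}{(\mu_A^2+\mu_B^2+c_1)(\sigma_A^2+\sigma_B^2+c_2)}$, where $\mu_A,\mu_B$ and $\sigma_A^2,\sigma_B^2$ are the averages and variances of the entries of $A_Y,B_Y$, $\mathrm{cov}$ their covariance, and $c_1,c_2>0$ fixed constants. *)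

theory Defs
  imports Complex_Main "HOL-Library.Extended_Real"
begin

definition cheb_t :: "nat \<Rightarrow> nat \<Rightarrow> real" where
  "cheb_t n k = (2 * real k - 1) * pi / (2 * real n)"

definition cheb :: "nat \<Rightarrow> nat \<Rightarrow> real" where
  "cheb n k = cos (cheb_t n k)"

definition vp_q :: "nat \<Rightarrow> nat \<Rightarrow> nat \<Rightarrow> real \<Rightarrow> real" where
  "vp_q n m r \<xi> = (let t = arccos \<xi> in
     if r \<le> n - m then cos (real r * t)
     else (real n + real m - real r) / (2 * real m) * cos (real r * t)
        + (real n - real m - real r) / (2 * real m) * cos ((2 * real n - real r) * t))"

definition vp_Phi :: "nat \<Rightarrow> nat \<Rightarrow> nat \<Rightarrow> real \<Rightarrow> real" where
  "vp_Phi n m k \<xi> = 2 / real n *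
     (1/2 + (\<Sum>r = 1..n - 1. cos (real r * cheb_t n k) * vp_q n m r \<xi>))"

definition vp_V :: "nat \<Rightarrow> nat \<Rightarrow> nat \<Rightarrow> nat \<Rightarrow> (real \<Rightarrow> real \<Rightarrow> real) \<Rightarrow> real \<Rightarrow> real \<Rightarrow> real" where
  "vp_V n1 n2 m1 m2 g x y =
     (\<Sum>i = 1..n1. \<Sum>j = 1..n2. g (cheb n1 i) (cheb n2 j) * vp_Phi n1 m1 i x * vp_Phi n2 m2 j y)"

text \<open>A (real) nu x mu matrix is represented as a function of (row, column), indices
  i = 1..nu, j = 1..mu.  A color image is a function of (channel, row, column), channel 1..3.\<close>
type_synonym matrix = "nat \<Rightarrow> nat \<Rightarrow> real"
type_synonym cimage = "nat \<Rightarrow> nat \<Rightarrow> nat \<Rightarrow> real"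

definition mse :: "nat \<Rightarrow> nat \<Rightarrow> matrix \<Rightarrow> matrix \<Rightarrow> real" where
  "mse \<nu> \<mu> A B = (\<Sum>i = 1..\<nu>. \<Sum>j = 1..\<mu>. (A i j - B i j)\<^sup>2) / (real \<nu> * real \<mu>)"

definition mse_color :: "nat \<Rightarrow> nat \<Rightarrow> cimage \<Rightarrow> cimage \<Rightarrow> real" where
  "mse_color \<nu> \<mu> A B = (\<Sum>c = 1..3. mse \<nu> \<mu> (A c) (B c)) / 3"

definition luma :: "(nat \<Rightarrow> real) \<Rightarrow> cimage \<Rightarrow> matrix" where
  "luma \<alpha> A = (\<lambda>i j. (\<Sum>c = 1..3. \<alpha> c * A c i j) + \<alpha> 4)"

definition psnr :: "real \<Rightarrow> (nat \<Rightarrow> real) \<Rightarrow> nat \<Rightarrow> nat \<Rightarrow> cimage \<Rightarrow> cimage \<Rightarrow> ereal" where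
  "psnr maxf \<alpha> \<nu> \<mu> A B =
     (let e = mse \<nu> \<mu> (luma \<alpha> A) (luma \<alpha> B) in
      if e = 0 then \<infinity> else ereal (20 * log 10 (maxf / sqrt e)))"

definition mat_mean :: "nat \<Rightarrow> nat \<Rightarrow> matrix \<Rightarrow> real" where
  "mat_mean \<nu> \<mu> A = (\<Sum>i = 1..\<nu>. \<Sum>j = 1..\<mu>. A i j) / (real \<nu> * real \<mu>)"

definition mat_cov :: "nat \<Rightarrow> nat \<Rightarrow> matrix \<Rightarrow> matrix \<Rightarrow> real" where
  "mat_cov \<nu> \<mu> A B = (\<Sum>i = 1..\<nu>. \<Sum>j = 1..\<mu>.
      (A i j - mat_mean \<nu> \<mu> A) * (B i j - mat_mean \<nu> \<mu> B)) / (real \<nu> * real \<mu>)"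

definition mat_var :: "nat \<Rightarrow> nat \<Rightarrow> matrix \<Rightarrow> real" where
  "mat_var \<nu> \<mu> A = mat_cov \<nu> \<mu> A A"

definition ssim :: "real \<Rightarrow> real \<Rightarrow> (nat \<Rightarrow> real) \<Rightarrow> nat \<Rightarrow> nat \<Rightarrow> cimage \<Rightarrow> cimage \<Rightarrow> real" where
  "ssim c1 c2 \<alpha> \<nu> \<mu> A B =
     (let AY = luma \<alpha> A; BY = luma \<alpha> B;
          mA = mat_mean \<nu> \<mu> AY; mB = mat_mean \<nu> \<mu> BY in
      ((2 * mA * mB + c1) * (2 * mat_cov \<nu> \<mu> AY BY + c2)) /
      ((mA\<^sup>2 + mB\<^sup>2 + c1) * (mat_var \<nu> \<mu> AY + mat_var \<nu> \<mu> BY + c2)))"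

end

theory Submission imports Defs begin


lemma dirichlet_aux:
  "sin (x/2) * (1 + 2 * (\<Sum>r=1..n. cos (real r * x))) = sin ((real n + 1/2) * x)"
proof (induction n)
  case 0 then show ?case by simp
next
  case (Suc n)
  have e: "2 * sin (x/2) * cos ((real n + 1) * x) = sin ((real n + 3/2) * x) - sin ((real n + 1/2) * x)"
  proof -
    have a: "(real n + 3/2) * x = (real n + 1) * x + x/2" by (simp add: algebra_simps)
    have b: "(real n + 1/2) * x = (real n + 1) * x - x/2" by (simp add: algebra_simps)
    show ?thesis unfolding a b sin_add sin_diff by (simp add: algebra_simps)
  qed
  have "sin (x/2) * (1 + 2 * (\<Sum>r=1..Suc n. cos (real r * x)))
      = sin (x/2) * (1 + 2 * (\<Sum>r=1..n. cos (real r * x))) + 2 * sin (x/2) * cos ((real n + 1) * x)"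
    by (simp add: algebra_simps)
  also have "\<dots> = sin ((real (Suc n) + 1/2) * x)" using Suc e by (simp add: algebra_simps)
  finally show ?case .
qed

lemma dirichlet_val:
  assumes "n > 0" "0 < p" "p < 2*n"
  shows "1 + 2 * (\<Sum>r=1..n-1. cos (real r * (real p * pi / real n))) = (-1)^(p+1)"
proof -
  define x where "x = real p * pi / real n"
  have sx: "sin (x/2) > 0" unfolding x_def
    apply (rule sin_gt_zero) using assms by (auto simp: field_simps)
  have "sin (x/2) * (1 + 2 * (\<Sum>r=1..n-1. cos (real r * x))) = sin ((real (n-1) + 1/2) * x)"
    by (rule dirichlet_aux)
  also have "(real (n-1) + 1/2) * x = real p * pi - x/2"
    using assms unfolding x_def by (simp add: of_nat_diff field_simps)
  also have "sin (real p * pi - x/2) = (-1)^(p+1) * sin (x/2)"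
    by (simp add: sin_diff sin_npi cos_npi)
  finally show ?thesis using sx x_def by (metis mult.commute mult_right_cancel less_irrefl)
qed


lemma D_even: "(\<Sum>r=1..n-1. cos (real r * (- y))) = (\<Sum>r=1..n-1. cos (real r * y))"
  by simp

lemma orth:
  assumes "k \<in> {1..n}" "j \<in> {1..n}"
  shows "1 + 2 * (\<Sum>r=1..n-1. cos (real r * cheb_t n k) * cos (real r * cheb_t n j))
         = (if k = j then real (2*n) / 2 * 2 / 2 else 0)"
proof -
  have n: "n > 0" using assms by auto
  define D where "D y = 1 + 2 * (\<Sum>r=1..n-1. cos (real r * y))" for y
  have split: "1 + 2 * (\<Sum>r=1..n-1. cos (real r * cheb_t n k) * cos (real r * cheb_t n j))
     = (D (cheb_t n k - cheb_t n j) + D (cheb_t n k + cheb_t n j)) / 2"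
  proof -
    have "(\<Sum>r=1..n-1. cos (real r * cheb_t n k) * cos (real r * cheb_t n j))
      = (\<Sum>r=1..n-1. cos (real r * (cheb_t n k - cheb_t n j))) / 2 + (\<Sum>r=1..n-1. cos (real r * (cheb_t n k + cheb_t n j))) / 2"
      unfolding cos_times_cos sum_divide_distrib[symmetric] sum.distrib[symmetric] add_divide_distrib
      by (simp add: algebra_simps sum.distrib sum_divide_distrib)
    then show ?thesis unfolding D_def by simp
  qed
  have sum2: "cheb_t n k + cheb_t n j = real (k + j - 1) * pi / real n"
    using assms n unfolding cheb_t_def by (simp add: of_nat_diff field_simps)
  have Dp: "D (real (k + j - 1) * pi / real n) = (-1)^(k+j)"
  proof -
    have "D (real (k + j - 1) * pi / real n) = (-1)^(k+j-1+1)"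
      unfolding D_def by (rule dirichlet_val) (use assms in auto)
    also have "k+j-1+1 = k+j" using assms by auto
    finally show ?thesis .
  qed
  show ?thesis
  proof (cases "k = j")
    case True
    have "D 0 = 1 + 2 * real (n-1)" unfolding D_def by simp
    then have "D (cheb_t n k - cheb_t n j) = 2 * real n - 1" using True n by (simp add: of_nat_diff)
    moreover have "(-1::real)^(k+j) = 1" using True by (simp add: mult_2[symmetric])
    ultimately show ?thesis unfolding split sum2 Dp using True by simp
  next
    case False
    show ?thesis
    proof (cases "k < j")
      case lt: True
      have "cheb_t n k - cheb_t n j = - (real (j - k) * pi / real n)"
        using lt unfolding cheb_t_def using n by (simp add: of_nat_diff field_simps)
      then have "D (cheb_t n k - cheb_t n j) = D (real (j - k) * pi / real n)"
        unfolding D_def by simp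
      also have "\<dots> = (-1)^(j-k+1)"
        unfolding D_def by (rule dirichlet_val) (use assms lt in auto)
      finally have d1: "D (cheb_t n k - cheb_t n j) = (-1)^(j-k+1)" .
      have e: "k + j = (j - k + 1) + (2*k - 1)" using assms lt by auto
      have o: "odd (2*k - 1)" using assms by auto
      have "(-1::real)^(k+j) = - ((-1)^(j-k+1))"
        unfolding e power_add using o by simp
      then show ?thesis unfolding split sum2 Dp d1 using False by simp
    next
      case gt: False
      with False have gt: "j < k" by auto
      have "cheb_t n k - cheb_t n j = (real (k - j) * pi / real n)"
        using gt unfolding cheb_t_def using n by (simp add: of_nat_diff field_simps)
      then have d1: "D (cheb_t n k - cheb_t n j) = (-1)^(k-j+1)"
        unfolding D_def by (simp only:) (rule dirichlet_val, use assms gt in auto)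
      have e: "k + j = (k - j + 1) + (2*j - 1)" using assms gt by auto
      have o: "odd (2*j - 1)" using assms by auto
      have p: "(-1::real)^(k+j) = - ((-1)^(k-j+1))"
        unfolding e power_add using o by simp
      show ?thesis unfolding split sum2 Dp d1 p using False by simp
    qed
  qed
qed


lemma cheb_t_range: "j \<in> {1..n} \<Longrightarrow> 0 \<le> cheb_t n j \<and> cheb_t n j \<le> pi"
proof -
  assume j: "j \<in> {1..n}"
  then have "2 * real j - 1 \<le> 2 * real n" by auto
  then have "(2 * real j - 1) * pi \<le> (2 * real n) * pi" by (simp add: mult_right_mono)
  then show ?thesis unfolding cheb_t_def using j by (auto simp: field_simps)
qed

lemma vp_q_node:
  assumes "m < n" "j \<in> {1..n}" "1 \<le> r" "r \<le> n - 1"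
  shows "vp_q n m r (cheb n j) = cos (real r * cheb_t n j)"
proof -
  have ac: "arccos (cheb n j) = cheb_t n j"
    unfolding cheb_def using cheb_t_range[OF assms(2)] by (simp add: arccos_cos)
  show ?thesis
  proof (cases "r \<le> n - m")
    case True then show ?thesis unfolding vp_q_def ac by simp
  next
    case False
    then have m: "m > 0" using assms by auto
    have "(2 * real n - real r) * cheb_t n j = real (2*j-1) * pi - real r * cheb_t n j"
      using assms unfolding cheb_t_def by (simp add: of_nat_diff field_simps)
    moreover have "cos (real (2*j-1) * pi) = -1" using assms by (simp only: cos_npi) simp
    ultimately have c: "cos ((2 * real n - real r) * cheb_t n j) = - cos (real r * cheb_t n j)"
      by (simp only: cos_diff sin_npi)
    have "(real n + real m - real r) / (2 * real m) * cos (real r * cheb_t n j) +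
          (real n - real m - real r) / (2 * real m) * (- cos (real r * cheb_t n j))
          = cos (real r * cheb_t n j)"
      using m by (simp add: field_simps)
    then show ?thesis unfolding vp_q_def ac Let_def c using False by simp
  qed
qed

lemma vp_Phi_node:
  assumes "m < n" "j \<in> {1..n}" "k \<in> {1..n}"
  shows "vp_Phi n m k (cheb n j) = (if k = j then 1 else 0)"
proof -
  have "vp_Phi n m k (cheb n j) = 2 / real n * (1/2 + (\<Sum>r = 1..n - 1. cos (real r * cheb_t n k) * cos (real r * cheb_t n j)))"
    unfolding vp_Phi_def using assms by (simp add: vp_q_node)
  also have "\<dots> = (1 + 2 * (\<Sum>r = 1..n - 1. cos (real r * cheb_t n k) * cos (real r * cheb_t n j))) / real n"
    using assms by (simp add: field_simps)
  also have "\<dots> = (if k = j then 1 else 0)"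
    unfolding orth[OF assms(3,2)] using assms by auto
  finally show ?thesis .
qed

lemma vp_V_node:
  assumes "m1 < n1" "m2 < n2" "a \<in> {1..n1}" "b \<in> {1..n2}"
  shows "vp_V n1 n2 m1 m2 g (cheb n1 a) (cheb n2 b) = g (cheb n1 a) (cheb n2 b)"
proof -
  have "vp_V n1 n2 m1 m2 g (cheb n1 a) (cheb n2 b) =
     (\<Sum>i = 1..n1. if i = a then (\<Sum>j = 1..n2. (if j = b then g (cheb n1 i) (cheb n2 j) else 0)) else 0)"
    unfolding vp_V_def
  proof (intro sum.cong refl)
    fix i assume i: "i \<in> {1..n1}"
    show "(\<Sum>j = 1..n2. g (cheb n1 i) (cheb n2 j) * vp_Phi n1 m1 i (cheb n1 a) * vp_Phi n2 m2 j (cheb n2 b))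
      = (if i = a then (\<Sum>j = 1..n2. (if j = b then g (cheb n1 i) (cheb n2 j) else 0)) else 0)"
      using assms i by (auto simp: vp_Phi_node if_distrib[of "\<lambda>z. _ * z"] cong: if_cong)
  qed
  also have "\<dots> = g (cheb n1 a) (cheb n2 b)" using assms by simp
  finally show ?thesis .
qed


lemma sum_sub2:
  fixes F :: "nat \<Rightarrow> nat \<Rightarrow> real"
  assumes "inj_on K {1..N1}" "K ` {1..N1} \<subseteq> {1..n1}" "inj_on H {1..N2}" "H ` {1..N2} \<subseteq> {1..n2}"
    and nn: "\<And>a b. F a b \<ge> 0"
  shows "(\<Sum>i=1..N1. \<Sum>j=1..N2. F (K i) (H j)) \<le> (\<Sum>a=1..n1. \<Sum>b=1..n2. F a b)"
proof -
  have "(\<Sum>i=1..N1. \<Sum>j=1..N2. F (K i) (H j)) \<le> (\<Sum>i=1..N1. \<Sum>b=1..n2. F (K i) b)"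
  proof (rule sum_mono)
    fix i
    have "(\<Sum>j=1..N2. F (K i) (H j)) = (\<Sum>b\<in>H ` {1..N2}. F (K i) b)"
      using assms(3) by (simp add: sum.reindex)
    also have "\<dots> \<le> (\<Sum>b=1..n2. F (K i) b)"
      by (rule sum_mono2) (use assms(4) nn in auto)
    finally show "(\<Sum>j=1..N2. F (K i) (H j)) \<le> (\<Sum>b=1..n2. F (K i) b)" .
  qed
  also have "\<dots> = (\<Sum>a\<in>K ` {1..N1}. \<Sum>b=1..n2. F a b)"
    using assms(1) by (simp add: sum.reindex)
  also have "\<dots> \<le> (\<Sum>a=1..n1. \<Sum>b=1..n2. F a b)"
    by (rule sum_mono2) (use assms(2) nn in \<open>auto intro: sum_nonneg\<close>)
  finally show ?thesis .
qed

lemma mse_sub: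
  assumes "inj_on K {1..N1}" "K ` {1..N1} \<subseteq> {1..n1}" "inj_on H {1..N2}" "H ` {1..N2} \<subseteq> {1..n2}"
    and "real n1 = s * real N1" "real n2 = s * real N2" "N1 > 0" "N2 > 0" "s > 0"
    and AB: "\<And>i j. i \<in> {1..N1} \<Longrightarrow> j \<in> {1..N2} \<Longrightarrow> A i j = A' (K i) (H j) \<and> B i j = B' (K i) (H j)"
  shows "mse N1 N2 A B \<le> s\<^sup>2 * mse n1 n2 A' B'"
proof -
  have "(\<Sum>i=1..N1. \<Sum>j=1..N2. (A i j - B i j)\<^sup>2) = (\<Sum>i=1..N1. \<Sum>j=1..N2. (\<lambda>a b. (A' a b - B' a b)\<^sup>2) (K i) (H j))"
    using AB by (intro sum.cong refl) auto
  also have "\<dots> \<le> (\<Sum>a=1..n1. \<Sum>b=1..n2. (A' a b - B' a b)\<^sup>2)"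
    by (rule sum_sub2) (use assms in auto)
  finally have le: "(\<Sum>i=1..N1. \<Sum>j=1..N2. (A i j - B i j)\<^sup>2) \<le> (\<Sum>a=1..n1. \<Sum>b=1..n2. (A' a b - B' a b)\<^sup>2)" .
  have "s\<^sup>2 * mse n1 n2 A' B' = (\<Sum>a=1..n1. \<Sum>b=1..n2. (A' a b - B' a b)\<^sup>2) / (real N1 * real N2)"
    unfolding mse_def assms(5,6) using assms by (simp add: field_simps power2_eq_square)
  then show ?thesis unfolding mse_def using le assms
    by (simp add: divide_right_mono)
qed


lemma node_embed:
  assumes "l \<ge> 1" "N > 0" "n = (2*l-1) * N"
  shows "inj_on (\<lambda>i. (2*l-1)*i + 1 - l) {1..N}"
    and "(\<lambda>i. (2*l-1)*i + 1 - l) ` {1..N} \<subseteq> {1..n}"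
    and "\<And>i. i \<in> {1..N} \<Longrightarrow> cheb N i = cheb n ((2*l-1)*i + 1 - l)"
proof -
  show "inj_on (\<lambda>i. (2*l-1)*i + 1 - l) {1..N}"
  proof (rule inj_onI)
    fix x y assume "x \<in> {1..N}" "y \<in> {1..N}" "(2*l-1)*x + 1 - l = (2*l-1)*y + 1 - l"
    moreover have "(2*l-1)*x \<ge> (2*l-1)" "(2*l-1)*y \<ge> (2*l-1)" using calculation by simp_all
    ultimately have "(2*l-1)*x = (2*l-1)*y" using assms by linarith
    then show "x = y" using assms by simp
  qed
  show "(\<lambda>i. (2*l-1)*i + 1 - l) ` {1..N} \<subseteq> {1..n}"
  proof
    fix z assume "z \<in> (\<lambda>i. (2*l-1)*i + 1 - l) ` {1..N}"
    then obtain i where i: "i \<in> {1..N}" "z = (2*l-1)*i + 1 - l" by auto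
    have a: "(2*l-1)*i \<ge> (2*l-1)" using i by simp
    have b: "(2*l-1)*i \<le> (2*l-1)*N" using i by simp
    obtain P where P: "P = (2*l-1)*i" by simp
    have "z = P + 1 - l" "P \<ge> 2*l-1" "P \<le> n" using i a b assms P by simp_all
    then show "z \<in> {1..n}" using assms(1) by auto
  qed
  fix i assume i: "i \<in> {1..N}"
  have a: "(2*l-1)*i \<ge> (2*l-1)" using i by simp
  have "real ((2*l-1)*i + 1 - l) = (2 * real l - 1) * real i + 1 - real l"
  proof -
    have le: "l \<le> (2*l-1)*i + 1" using a assms(1) by linarith
    have "real ((2*l-1)*i + 1 - l) = real ((2*l-1)*i + 1) - real l" using le by (rule of_nat_diff)
    moreover have "real (2*l-1) = 2 * real l - 1" using assms(1) by (simp add: of_nat_diff)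
    ultimately show ?thesis by simp
  qed
  then have e1: "2 * real ((2*l-1)*i + 1 - l) - 1 = (2 * real l - 1) * (2 * real i - 1)"
    by (simp add: algebra_simps)
  have e2: "real n = (2 * real l - 1) * real N" using assms by (simp add: of_nat_diff)
  have S: "2 * real l - 1 > 0" using assms by simp
  have "cheb_t n ((2*l-1)*i + 1 - l) = (2 * real ((2*l-1)*i + 1 - l) - 1) * pi / (2 * real n)"
    unfolding cheb_t_def by simp
  also have "\<dots> = ((2 * real l - 1) * (2 * real i - 1)) * pi / (2 * ((2 * real l - 1) * real N))"
    by (simp only: e1 e2)
  also have "\<dots> = cheb_t N i" unfolding cheb_t_def using S assms(2) by (simp add: field_simps)
  finally show "cheb N i = cheb n ((2*l-1)*i + 1 - l)" unfolding cheb_def by simp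
qed


theorem proposition1:
  fixes l n1 n2 N1 N2 m1 m2 :: nat
    and f ft :: "nat \<Rightarrow> real \<Rightarrow> real \<Rightarrow> real"
    and \<alpha> :: "nat \<Rightarrow> real" and maxf c1 c2 s :: real
    and I It R Rt :: cimage
  assumes s_def: "s = 2 * real l - 1"
    and ratio1: "real n1 / real N1 = s" and ratio2: "real n2 / real N2 = s"
    and m1: "m1 < n1" and m2: "m2 < n2"
    and maxf: "maxf > 0" and c1: "c1 > 0" and c2: "c2 > 0"
    and I_def: "I = (\<lambda>c i j. f c (cheb n1 i) (cheb n2 j))"
    and It_def: "It = (\<lambda>c i j. ft c (cheb n1 i) (cheb n2 j))"
    and R_def: "R = (\<lambda>c i j. f c (cheb N1 i) (cheb N2 j))"
    and Rt_def: "Rt = (\<lambda>c i j. vp_V n1 n2 m1 m2 (ft c) (cheb N1 i) (cheb N2 j))"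
  shows "mse_color N1 N2 R Rt \<le> s\<^sup>2 * mse_color n1 n2 I It
    \<and> mse N1 N2 (luma \<alpha> R) (luma \<alpha> Rt) \<le> s\<^sup>2 * mse n1 n2 (luma \<alpha> I) (luma \<alpha> It)
    \<and> ((\<forall>c\<in>{1..3}. \<forall>i\<in>{1..n1}. \<forall>j\<in>{1..n2}. I c i j = It c i j) \<longrightarrow>
         psnr maxf \<alpha> N1 N2 R Rt = \<infinity> \<and> ssim c1 c2 \<alpha> N1 N2 R Rt = 1)"
proof -
  have l1: "l \<ge> 1"
  proof (rule ccontr)
    assume "\<not> l \<ge> 1" then have "s = -1" using s_def by simp
    moreover have "real n1 / real N1 \<ge> 0" by simp
    ultimately show False using ratio1 by simp
  qed
  have spos: "s > 0" using s_def l1 by simp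
  have N1: "N1 > 0" using ratio1 spos by (cases "N1 = 0") auto
  have N2: "N2 > 0" using ratio2 spos by (cases "N2 = 0") auto
  have rn1: "real n1 = s * real N1" using ratio1 N1 by (simp add: field_simps)
  have rn2: "real n2 = s * real N2" using ratio2 N2 by (simp add: field_simps)
  have sS: "s = real (2*l-1)" using s_def l1 by (simp add: of_nat_diff)
  have n1e: "n1 = (2*l-1) * N1" proof -
    have "real n1 = real ((2*l-1) * N1)" using rn1 unfolding sS by simp
    then show ?thesis by (simp only: of_nat_eq_iff)
  qed
  have n2e: "n2 = (2*l-1) * N2" proof -
    have "real n2 = real ((2*l-1) * N2)" using rn2 unfolding sS by simp
    then show ?thesis by (simp only: of_nat_eq_iff)
  qed
  define K where "K i = (2*l-1)*i + 1 - l" for i :: nat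
  note E1 = node_embed[OF l1 N1 n1e, folded K_def]
  note E2 = node_embed[OF l1 N2 n2e, folded K_def]
  have KH: "K i \<in> {1..n1}" "K j \<in> {1..n2}" if "i \<in> {1..N1}" "j \<in> {1..N2}" for i j
    using E1(2) that(1) apply (simp only: image_subset_iff)
    using E2(2) that(2) by (simp only: image_subset_iff)
  have Rpt: "R c i j = I c (K i) (K j)" "Rt c i j = It c (K i) (K j)"
    if "i \<in> {1..N1}" "j \<in> {1..N2}" for c i j
  proof -
    show "R c i j = I c (K i) (K j)" unfolding R_def I_def using E1(3)[OF that(1)] E2(3)[OF that(2)] by simp
    show "Rt c i j = It c (K i) (K j)" unfolding Rt_def It_def
      using E1(3)[OF that(1)] E2(3)[OF that(2)] vp_V_node[OF m1 m2 KH[OF that]] by simp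
  qed
  have ch: "mse N1 N2 (R c) (Rt c) \<le> s\<^sup>2 * mse n1 n2 (I c) (It c)" for c
    by (rule mse_sub[OF E1(1,2) E2(1,2) rn1 rn2 N1 N2 spos]) (simp add: Rpt)
  have P1: "mse_color N1 N2 R Rt \<le> s\<^sup>2 * mse_color n1 n2 I It"
  proof -
    have "(\<Sum>c = 1..3. mse N1 N2 (R c) (Rt c)) \<le> (\<Sum>c = 1..3. s\<^sup>2 * mse n1 n2 (I c) (It c))"
      by (rule sum_mono) (rule ch)
    then show ?thesis unfolding mse_color_def by (simp add: sum_distrib_left[symmetric])
  qed
  have P2: "mse N1 N2 (luma \<alpha> R) (luma \<alpha> Rt) \<le> s\<^sup>2 * mse n1 n2 (luma \<alpha> I) (luma \<alpha> It)"
    by (rule mse_sub[OF E1(1,2) E2(1,2) rn1 rn2 N1 N2 spos]) (simp add: luma_def Rpt)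
  have P3: "psnr maxf \<alpha> N1 N2 R Rt = \<infinity> \<and> ssim c1 c2 \<alpha> N1 N2 R Rt = 1"
    if eq: "\<forall>c\<in>{1..3}. \<forall>i\<in>{1..n1}. \<forall>j\<in>{1..n2}. I c i j = It c i j"
  proof -
    have RR: "R c i j = Rt c i j" if "c \<in> {1..3}" "i \<in> {1..N1}" "j \<in> {1..N2}" for c i j
      using Rpt[OF that(2,3)] eq that KH[OF that(2,3)] by simp
    define AY where "AY = luma \<alpha> R"
    define BY where "BY = luma \<alpha> Rt"
    have AB: "AY i j = BY i j" if "i \<in> {1..N1}" "j \<in> {1..N2}" for i j
      unfolding AY_def BY_def luma_def using RR that by (auto intro!: sum.cong)
    have mse0: "mse N1 N2 AY BY = 0" unfolding mse_def using AB by simp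
    have mm: "mat_mean N1 N2 BY = mat_mean N1 N2 AY"
      unfolding mat_mean_def using AB by (auto intro!: sum.cong)
    have cv: "mat_cov N1 N2 AY BY = mat_var N1 N2 AY" "mat_var N1 N2 BY = mat_var N1 N2 AY"
      unfolding mat_var_def mat_cov_def mm using AB by (auto intro!: sum.cong)
    have vnn: "mat_var N1 N2 AY \<ge> 0"
      unfolding mat_var_def mat_cov_def by (auto intro!: sum_nonneg divide_nonneg_nonneg)
    have d1: "2 * mat_mean N1 N2 AY * mat_mean N1 N2 AY + c1 > 0" 
    proof -
      have "mat_mean N1 N2 AY * mat_mean N1 N2 AY \<ge> 0" by simp
      then show ?thesis using c1 by linarith
    qed
    have d2: "2 * mat_var N1 N2 AY + c2 > 0" using c2 vnn by simp
    have "ssim c1 c2 \<alpha> N1 N2 R Rt =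
      ((2 * mat_mean N1 N2 AY * mat_mean N1 N2 AY + c1) * (2 * mat_var N1 N2 AY + c2)) /
      ((2 * mat_mean N1 N2 AY * mat_mean N1 N2 AY + c1) * (2 * mat_var N1 N2 AY + c2))"
      unfolding ssim_def Let_def AY_def[symmetric] BY_def[symmetric] mm cv
      by (simp add: power2_eq_square algebra_simps)
    also have "\<dots> = 1" using d1 d2 by simp
    finally show ?thesis unfolding psnr_def Let_def AY_def[symmetric] BY_def[symmetric] mse0 by simp
  qed
  show ?thesis using P1 P2 P3 by blast
qed

end
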